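(* Let $p$ be a prime and $F$ a field of characteristic $p$. Let $L\in F[x]$ be a $p$-polynomial of $p$-degree $n$ with no repeated roots, let $E$ be a splitting field of $L$ over $F$, and let $V_L\subseteq E$ be the $\mathbb{F}_p$-space of roots of $L$. Let $r$ be a positive divisor of $p-1$ and let $P(x)\in F[x]$ be defined by $L(x)/x=P(x^r)$. Let $L_P\in F[x]$ be a $p$-linearized polynomial of smallest degree divisible by $P$. Then the $\mathbb{F}_p$-space of roots of $L_P$ is a homomorphic image of the $r$-th symmetric power $\mathrm{Sym}^r(V_L)$ of $V_L$ over $\mathbb{F}_p$.
   Context: A $p$-polynomial of $p$-degree $n$ is $\sum_{i=0}^n a_ix^{p^i}$ with $a_n\neq0$. The $r$-th symmetric power of an $n$-dimensional space with basis $\alpha_1,\dots,\alpha_n$ is identified with the space of homogeneous polynomials of degree $r$ in $\alpha_1,\dots,\alpha_n$. *)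

theory Defs
  imports "HOL-Computational_Algebra.Polynomial" "HOL-Library.Multiset"
begin

definition is_subfield :: "'a::field set \<Rightarrow> bool" where
  "is_subfield S \<longleftrightarrow> 0 \<in> S \<and> 1 \<in> S \<and>
     (\<forall>x\<in>S. \<forall>y\<in>S. x + y \<in> S \<and> x * y \<in> S) \<and>
     (\<forall>x\<in>S. - x \<in> S \<and> inverse x \<in> S)"

definition poly_over :: "'a::zero set \<Rightarrow> 'a poly \<Rightarrow> bool" where
  "poly_over S q \<longleftrightarrow> (\<forall>i. coeff q i \<in> S)"

definition p_poly :: "nat \<Rightarrow> nat \<Rightarrow> 'a::zero poly \<Rightarrow> bool" where
  "p_poly p n L \<longleftrightarrow> coeff L (p ^ n) \<noteq> 0 \<and>
     (\<forall>k. coeff L k \<noteq> 0 \<longrightarrow> (\<exists>i\<le>n. k = p ^ i))"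

definition p_linearized :: "nat \<Rightarrow> 'a::zero poly \<Rightarrow> bool" where
  "p_linearized p L \<longleftrightarrow> (\<exists>n. p_poly p n L)"

definition is_splitting_field :: "'a::field set \<Rightarrow> 'a poly \<Rightarrow> 'a set \<Rightarrow> bool" where
  "is_splitting_field K q E \<longleftrightarrow> is_subfield E \<and> K \<subseteq> E \<and>
     (\<exists>c xs. set xs \<subseteq> E \<and> q = smult c (\<Prod>x\<leftarrow>xs. [:- x, 1:])) \<and>
     (\<forall>S. is_subfield S \<and> K \<subseteq> S \<and> {x. poly q x = 0} \<subseteq> S \<longrightarrow> E \<subseteq> S)"

definition root_space :: "'a::comm_semiring_0 set \<Rightarrow> 'a poly \<Rightarrow> 'a set" where
  "root_space E q = {x \<in> E. poly q x = 0}"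

(* r-th symmetric power of an n-dimensional F_p-space, realised as homogeneous
   polynomials of degree r in n variables with coefficients in F_p = {0..<p}:
   a monomial is a multiset of size r of variable indices < n. *)
definition sym_monomials :: "nat \<Rightarrow> nat \<Rightarrow> nat multiset set" where
  "sym_monomials n r = {m. size m = r \<and> set_mset m \<subseteq> {..<n}}"

definition sym_power :: "nat \<Rightarrow> nat \<Rightarrow> nat \<Rightarrow> (nat multiset \<Rightarrow> nat) set" where
  "sym_power p n r = {c. \<forall>m. c m < p \<and> (m \<notin> sym_monomials n r \<longrightarrow> c m = 0)}"

definition sym_add :: "nat \<Rightarrow> (nat multiset \<Rightarrow> nat) \<Rightarrow> (nat multiset \<Rightarrow> nat) \<Rightarrow> (nat multiset \<Rightarrow> nat)" where
  "sym_add p c d = (\<lambda>m. (c m + d m) mod p)"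

definition sym_smul :: "nat \<Rightarrow> nat \<Rightarrow> (nat multiset \<Rightarrow> nat) \<Rightarrow> (nat multiset \<Rightarrow> nat)" where
  "sym_smul p a c = (\<lambda>m. (a * c m) mod p)"

(* W (a subset of a field of characteristic p, with F_p acting via of_nat) is a homomorphic
   image of Sym^r(F_p^n): there is a surjective F_p-linear map Sym^r(F_p^n) \<rightarrow> W *)
definition sym_power_hom_image :: "nat \<Rightarrow> nat \<Rightarrow> nat \<Rightarrow> 'a::semiring_1 set \<Rightarrow> bool" where
  "sym_power_hom_image p n r W \<longleftrightarrow>
     (\<exists>f. (\<forall>c\<in>sym_power p n r. \<forall>d\<in>sym_power p n r. f (sym_add p c d) = f c + f d) \<and>
          (\<forall>a<p. \<forall>c\<in>sym_power p n r. f (sym_smul p a c) = of_nat a * f c) \<and>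
          f ` sym_power p n r = W)"

end

theory Submission
  imports Defs "HOL-Computational_Algebra.Primes" "HOL-Number_Theory.Cong"
begin

lemma subfield_sum:
  assumes "is_subfield K" "\<And>i. i \<in> A \<Longrightarrow> f i \<in> K"
  shows "sum f A \<in> K"
  using assms(2)
proof (induction A rule: infinite_finite_induct)
  case (infinite A) then show ?case using assms(1) by (simp add: is_subfield_def)
next
  case empty then show ?case using assms(1) by (simp add: is_subfield_def)
next
  case (insert x F) then show ?case using assms(1) by (simp add: is_subfield_def)
qed

lemma subfield_simps:
  assumes "is_subfield K"
  shows "0 \<in> K" "1 \<in> K" "x \<in> K \<Longrightarrow> y \<in> K \<Longrightarrow> x + y \<in> K"
    "x \<in> K \<Longrightarrow> y \<in> K \<Longrightarrow> x * y \<in> K" "x \<in> K \<Longrightarrow> - x \<in> K"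
    "x \<in> K \<Longrightarrow> inverse x \<in> K"
    "x \<in> K \<Longrightarrow> y \<in> K \<Longrightarrow> x - y \<in> K"
    "x \<in> K \<Longrightarrow> y \<in> K \<Longrightarrow> x / y \<in> K"
proof -
  have K: "0 \<in> K" "1 \<in> K" "\<And>x y. x \<in> K \<Longrightarrow> y \<in> K \<Longrightarrow> x + y \<in> K"
    "\<And>x y. x \<in> K \<Longrightarrow> y \<in> K \<Longrightarrow> x * y \<in> K" "\<And>x. x \<in> K \<Longrightarrow> - x \<in> K"
    "\<And>x. x \<in> K \<Longrightarrow> inverse x \<in> K"
    using assms unfolding is_subfield_def by blast+
  show "0 \<in> K" "1 \<in> K" "x \<in> K \<Longrightarrow> y \<in> K \<Longrightarrow> x + y \<in> K"
    "x \<in> K \<Longrightarrow> y \<in> K \<Longrightarrow> x * y \<in> K" "x \<in> K \<Longrightarrow> - x \<in> K"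
    "x \<in> K \<Longrightarrow> inverse x \<in> K" using K by auto
  show "x \<in> K \<Longrightarrow> y \<in> K \<Longrightarrow> x - y \<in> K"
    using K(3)[of x "-y"] K(5)[of y] by (simp add: diff_conv_add_uminus del: add_uminus_conv_diff)
  show "x \<in> K \<Longrightarrow> y \<in> K \<Longrightarrow> x / y \<in> K"
    using K(4)[of x "inverse y"] K(6)[of y] by (simp add: divide_inverse)
qed

lemma of_nat_mod_CHAR:
  "of_nat (n mod CHAR('a)) = (of_nat n :: 'a::semiring_1)"
proof -
  have "of_nat n = (of_nat (n mod CHAR('a) + CHAR('a) * (n div CHAR('a))) :: 'a)"
    by simp
  also have "\<dots> = of_nat (n mod CHAR('a))" by (simp only: of_nat_add of_nat_mult of_nat_CHAR) simp
  finally show ?thesis by simp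
qed

definition spanset :: "nat \<Rightarrow> 'a::semiring_1 list \<Rightarrow> 'a set" where
  "spanset p ws = {(\<Sum>j<length ws. of_nat (a j) * ws ! j) | a. \<forall>j. a j < p}"

lemma spansetI: "(\<And>j. a j < p) \<Longrightarrow> (\<Sum>j<length ws. of_nat (a j) * ws ! j) \<in> spanset p ws"
  unfolding spanset_def by (intro CollectI exI[of _ a] conjI refl) simp

lemma spansetE: "x \<in> spanset p ws \<Longrightarrow> (\<And>a. x = (\<Sum>j<length ws. of_nat (a j) * ws ! j) \<Longrightarrow> (\<And>j. a j < p) \<Longrightarrow> thesis) \<Longrightarrow> thesis"
  unfolding spanset_def by auto

lemma spanset_Nil: "p > 0 \<Longrightarrow> spanset p [] = {0}"
  unfolding spanset_def by (auto intro!: exI[of _ "\<lambda>_. 0"])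

context
  fixes p :: nat
  assumes pr: "prime p" and ch: "CHAR('e::field) = p"
begin

lemma p_gt1: "p > 1" using pr prime_gt_1_nat by blast

lemma ofp: "of_nat p = (0::'e)" using ch of_nat_CHAR by metis

lemma ofmod: "of_nat (n mod p) = (of_nat n :: 'e)"
  using of_nat_mod_CHAR[where 'a='e] ch by simp

lemma closed_scale:
  fixes Z :: "'e set"
  assumes "0 \<in> Z" "\<forall>x\<in>Z. \<forall>y\<in>Z. x + y \<in> Z" "x \<in> Z"
  shows "of_nat a * x \<in> Z"
  by (induction a) (use assms in \<open>auto simp: algebra_simps\<close>)

lemma closed_minus:
  fixes Z :: "'e set"
  assumes "0 \<in> Z" "\<forall>x\<in>Z. \<forall>y\<in>Z. x + y \<in> Z" "x \<in> Z" "y \<in> Z"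
  shows "x - y \<in> Z"
proof -
  have "of_nat (p - 1) * y + y = of_nat p * y"
    using p_gt1 by (simp add: algebra_simps of_nat_diff)
  then have "- y = of_nat (p - 1) * y" using ofp by (simp add: add_eq_0_iff2)
  then show ?thesis using closed_scale[OF assms(1,2,4), of "p-1"] assms
    by (metis diff_conv_add_uminus)
qed

lemma spanset_sub:
  fixes Z :: "'e set"
  assumes "0 \<in> Z" "\<forall>x\<in>Z. \<forall>y\<in>Z. x + y \<in> Z" "set ws \<subseteq> Z"
  shows "spanset p ws \<subseteq> Z"
proof
  fix x assume "x \<in> spanset p ws"
  then obtain a where x: "x = (\<Sum>j<length ws. of_nat (a j) * ws ! j)"
    unfolding spanset_def by auto
  have "(\<Sum>j\<in>A. of_nat (a j) * ws ! j) \<in> Z" if "A \<subseteq> {..<length ws}" for A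
    using that
  proof (induction A rule: infinite_finite_induct)
    case (infinite A) then show ?case using assms by simp
  next
    case empty then show ?case using assms by simp
  next
    case (insert y F)
    have "ws ! y \<in> Z" using insert assms(3) by auto
    then have "of_nat (a y) * ws ! y \<in> Z" using closed_scale assms by blast
    then show ?case using insert assms by auto
  qed
  from this[of "{..<length ws}"] show "x \<in> Z" using x by simp
qed

lemma spanset_add:
  assumes "x \<in> spanset p ws" "y \<in> spanset p ws"
  shows "x + y \<in> spanset p (ws::'e list)"
proof -
  obtain a where a: "x = (\<Sum>j<length ws. of_nat (a j) * ws ! j)" "\<And>j. a j < p"
    using assms(1) by (rule spansetE) blast
  obtain b where b: "y = (\<Sum>j<length ws. of_nat (b j) * ws ! j)" "\<And>j. b j < p"
    using assms(2) by (rule spansetE) blast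
  have "x + y = (\<Sum>j<length ws. of_nat ((a j + b j) mod p) * ws ! j)"
    unfolding a b ofmod by (simp add: sum.distrib algebra_simps)
  moreover have "(\<Sum>j<length ws. of_nat ((a j + b j) mod p) * ws ! j) \<in> spanset p ws"
    by (rule spansetI) (use p_gt1 in auto)
  ultimately show ?thesis by (simp only:)
qed

lemma spanset_scale:
  assumes "x \<in> spanset p ws"
  shows "of_nat t * x \<in> spanset p (ws::'e list)"
proof -
  obtain a where a: "x = (\<Sum>j<length ws. of_nat (a j) * ws ! j)" "\<And>j. a j < p"
    using assms(1) by (rule spansetE) blast
  have "of_nat t * x = (\<Sum>j<length ws. of_nat ((t * a j) mod p) * ws ! j)"
    unfolding a ofmod by (simp add: sum_distrib_left algebra_simps)
  moreover have "(\<Sum>j<length ws. of_nat ((t * a j) mod p) * ws ! j) \<in> spanset p ws"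
    by (rule spansetI) (use p_gt1 in auto)
  ultimately show ?thesis by (simp only:)
qed

lemma spanset_zero: "0 \<in> spanset p (ws::'e list)"
  unfolding spanset_def using p_gt1 by (auto intro!: exI[of _ "\<lambda>_. 0"])

lemma spanset_snoc:
  assumes "s \<in> spanset p ws" "b < p"
  shows "s + of_nat b * w \<in> spanset p (ws @ [w::'e])"
proof -
  obtain a where a: "s = (\<Sum>j<length ws. of_nat (a j) * ws ! j)" "\<And>j. a j < p"
    using assms(1) by (rule spansetE) blast
  define a' where "a' = a(length ws := b)"
  have e1: "(\<Sum>j<length ws. of_nat (a' j) * (ws @ [w]) ! j) = s"
    unfolding a(1) by (intro sum.cong) (auto simp: a'_def nth_append)
  have e2: "(\<Sum>j<length (ws @ [w]). of_nat (a' j) * (ws @ [w]) ! j)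
      = (\<Sum>j<length ws. of_nat (a' j) * (ws @ [w]) ! j) + of_nat b * w"
    by (simp add: a'_def)
  have "s + of_nat b * w = (\<Sum>j<length (ws @ [w]). of_nat (a' j) * (ws @ [w]) ! j)"
    unfolding e2 e1 ..
  moreover have "(\<Sum>j<length (ws @ [w]). of_nat (a' j) * (ws @ [w]) ! j) \<in> spanset p (ws @ [w])"
    by (rule spansetI) (use a assms in \<open>auto simp: a'_def\<close>)
  ultimately show ?thesis by (simp only:)
qed

lemma spanset_finite: "finite (spanset p (ws::'e list))"
proof -
  let ?g = "\<lambda>as. \<Sum>j<length ws. of_nat (as ! j) * ws ! j"
  have "spanset p ws \<subseteq> ?g ` {as. set as \<subseteq> {..<p} \<and> length as = length ws}"
  proof
    fix x assume "x \<in> spanset p ws"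
    then obtain a where a: "x = (\<Sum>j<length ws. of_nat (a j) * ws ! j)" "\<And>j. a j < p"
      by (rule spansetE) blast
    have "x = ?g (map a [0..<length ws])" unfolding a(1)
      by (intro sum.cong) simp_all
    moreover have "map a [0..<length ws] \<in> {as. set as \<subseteq> {..<p} \<and> length as = length ws}"
      using a(2) by auto
    ultimately show "x \<in> ?g ` {as. set as \<subseteq> {..<p} \<and> length as = length ws}" by blast
  qed
  moreover have "finite {as. set as \<subseteq> {..<p} \<and> length as = length ws}"
    by (intro finite_lists_length_eq) auto
  ultimately show ?thesis using finite_subset by blast
qed

lemma spanset_closed_minus:
  assumes "x \<in> spanset p ws" "y \<in> spanset p ws"
  shows "x - y \<in> spanset p (ws::'e list)"
  by (rule closed_minus) (use assms spanset_zero spanset_add in auto)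

lemma spanset_cancel:
  assumes "s \<in> spanset p ws" "s' \<in> spanset p ws" "0 < d" "d < p"
    "of_nat d * w = s - s'"
  shows "w \<in> spanset p (ws::'e list)"
proof -
  have "coprime d p"
    using assms(3,4) pr by (metis coprime_commute dvd_imp_le not_le prime_imp_coprime)
  then obtain t where t: "[d * t = Suc 0] (mod p)"
    using cong_solve_coprime_nat by blast
  then have "(d * t) mod p = 1" using p_gt1 by (simp add: cong_def)
  then have "of_nat (d * t) = (1::'e)" using ofmod[of "d*t"] by simp
  then have "w = of_nat t * (of_nat d * w)" by (simp add: algebra_simps)
  also have "\<dots> = of_nat t * (s - s')" using assms(5) by simp
  finally show ?thesis using spanset_scale spanset_closed_minus assms(1,2) by metis
qed

lemma spanset_card_snoc:
  assumes "w \<notin> spanset p ws"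
  shows "p * card (spanset p ws) \<le> card (spanset p (ws @ [w::'e]))"
proof -
  let ?S = "spanset p ws"
  let ?g = "\<lambda>(b::nat, s::'e). s + of_nat b * w"
  have sub: "?g ` ({..<p} \<times> ?S) \<subseteq> spanset p (ws @ [w])"
    using spanset_snoc by auto
  have key: "b = b' \<and> s = s'" if b: "b < p" "s \<in> ?S" "b' < p" "s' \<in> ?S"
      and eq: "s + of_nat b * w = s' + of_nat b' * w" for b s b' s'
  proof (cases "b = b'")
    case True then show ?thesis using eq by simp
  next
    case False
    show ?thesis
    proof (cases "b < b'")
      case True
      have "of_nat (b' - b) * w = s - s'"
        using eq True by (simp add: of_nat_diff algebra_simps)
      then have "w \<in> ?S" using spanset_cancel[of s ws s' "b' - b" w] b True by auto
      then show ?thesis using assms by blast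
    next
      case False
      then have lt: "b' < b" using \<open>b \<noteq> b'\<close> by simp
      have "of_nat (b - b') * w = s' - s"
        using eq lt by (simp add: of_nat_diff algebra_simps)
      then have "w \<in> ?S" using spanset_cancel[of s' ws s "b - b'" w] b lt by auto
      then show ?thesis using assms by blast
    qed
  qed
  have inj: "inj_on ?g ({..<p} \<times> ?S)"
    unfolding inj_on_def using key by auto
  have "p * card ?S = card ({..<p} \<times> ?S)" by (simp add: card_cartesian_product)
  also have "\<dots> = card (?g ` ({..<p} \<times> ?S))" using inj by (simp add: card_image)
  also have "\<dots> \<le> card (spanset p (ws @ [w]))"
    using sub spanset_finite by (intro card_mono) auto
  finally show ?thesis .
qed

lemma span_exists_aux:
  fixes Z :: "'e set"
  assumes Z: "finite Z" "0 \<in> Z" "\<forall>x\<in>Z. \<forall>y\<in>Z. x + y \<in> Z"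
  shows "set ws \<subseteq> Z \<Longrightarrow> p ^ length ws \<le> card (spanset p ws) \<Longrightarrow>
    \<exists>ws'. set ws' \<subseteq> Z \<and> spanset p ws' = Z \<and> p ^ length ws' \<le> card Z"
proof (induction "card Z - card (spanset p ws)" arbitrary: ws rule: less_induct)
  case less
  have SZ: "spanset p ws \<subseteq> Z" using spanset_sub Z less.prems by blast
  show ?case
  proof (cases "spanset p ws = Z")
    case True then show ?thesis using less.prems by metis
  next
    case False
    then obtain w where w: "w \<in> Z" "w \<notin> spanset p ws" using SZ by blast
    have c1: "p * card (spanset p ws) \<le> card (spanset p (ws @ [w]))"
      using spanset_card_snoc w by blast
    have pos: "card (spanset p ws) > 0"
      using spanset_finite spanset_zero by (metis card_gt_0_iff empty_iff)
    have "card (spanset p ws) < card (spanset p (ws @ [w]))"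
      using c1 pos p_gt1 by (metis le_less_trans lessI mult_less_mono1 mult_1 nat_mult_less_cancel1 less_le_trans) 
    moreover have "spanset p (ws @ [w]) \<subseteq> Z"
      using spanset_sub Z less.prems w by auto
    moreover have "card (spanset p (ws @ [w])) \<le> card Z"
      using calculation(2) Z card_mono by blast
    ultimately have "card Z - card (spanset p (ws @ [w])) < card Z - card (spanset p ws)"
      by linarith
    moreover have "set (ws @ [w]) \<subseteq> Z" using less.prems w by auto
    moreover have "p ^ length (ws @ [w]) \<le> card (spanset p (ws @ [w]))"
    proof -
      have "p * p ^ length ws \<le> p * card (spanset p ws)" using less.prems(2) by (rule mult_le_mono2)
      then have "p * p ^ length ws \<le> card (spanset p (ws @ [w]))" using c1 by (rule order_trans)
      then show ?thesis by simp
    qed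
    ultimately show ?thesis using less.hyps by blast
  qed
qed

lemma span_exists:
  fixes Z :: "'e set"
  assumes Z: "finite Z" "0 \<in> Z" "\<forall>x\<in>Z. \<forall>y\<in>Z. x + y \<in> Z"
  shows "\<exists>ws. set ws \<subseteq> Z \<and> spanset p ws = Z \<and> p ^ length ws \<le> card Z"
proof -
  have "spanset p ([]::'e list) = {0}" using spanset_Nil[of p] p_gt1 by simp
  then have "card (spanset p ([]::'e list)) = 1" by simp
  then show ?thesis using span_exists_aux[OF Z, of "[]"] by simp
qed

end

lemma GE:
  fixes K :: "'e::field set" and u :: "'i \<Rightarrow> 'j \<Rightarrow> 'e"
  assumes K: "is_subfield K" and I: "finite I" and J: "finite J"
    and uK: "\<And>i j. i \<in> I \<Longrightarrow> j \<in> J \<Longrightarrow> u i j \<in> K"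
    and hyp: "card J < card I \<or> (\<exists>c. (\<exists>i\<in>I. c i \<noteq> 0) \<and> (\<forall>j\<in>J. (\<Sum>i\<in>I. c i * u i j) = 0))"
  shows "\<exists>c. (\<forall>i\<in>I. c i \<in> K) \<and> (\<exists>i\<in>I. c i \<noteq> 0) \<and> (\<forall>j\<in>J. (\<Sum>i\<in>I. c i * u i j) = 0)"
  using J I uK hyp
proof (induction J arbitrary: I u rule: finite_induct)
  case empty
  then have "I \<noteq> {}" by auto
  then show ?case using subfield_simps[OF K] by (intro exI[of _ "\<lambda>_. 1"]) auto
next
  case (insert j0 J)
  show ?case
  proof (cases "\<forall>i\<in>I. u i j0 = 0")
    case True
    have h: "card J < card I \<or> (\<exists>c. (\<exists>i\<in>I. c i \<noteq> 0) \<and> (\<forall>j\<in>J. (\<Sum>i\<in>I. c i * u i j) = 0))"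
      using insert.prems(3) insert.hyps by auto
    obtain c where c: "\<forall>i\<in>I. c i \<in> K" "\<exists>i\<in>I. c i \<noteq> 0" "\<forall>j\<in>J. (\<Sum>i\<in>I. c i * u i j) = 0"
      using insert.IH[OF insert.prems(1) _ h] insert.prems(2) by blast
    have "(\<Sum>i\<in>I. c i * u i j0) = 0" using True by simp
    then show ?thesis using c by (intro exI[of _ c]) auto
  next
    case False
    then obtain i0 where i0: "i0 \<in> I" "u i0 j0 \<noteq> 0" by blast
    define I' where "I' = I - {i0}"
    define t where "t i = u i j0 / u i0 j0" for i
    define u' where "u' i j = u i j - t i * u i0 j" for i j
    have finI': "finite I'" using insert.prems(1) by (simp add: I'_def)
    have tK: "t i \<in> K" if "i \<in> I" for i
      using that i0 insert.prems(2) subfield_simps[OF K] by (simp add: t_def)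
    have u'K: "u' i j \<in> K" if "i \<in> I'" "j \<in> J" for i j
      using that i0 insert.prems(2) tK subfield_simps[OF K] by (simp add: u'_def I'_def)
    have u'0: "u' i j0 = 0" for i
      using i0 by (simp add: u'_def t_def)
    have sumI: "(\<Sum>i\<in>I. f i) = f i0 + (\<Sum>i\<in>I'. f i)" for f :: "'i \<Rightarrow> 'e"
      using insert.prems(1) i0 unfolding I'_def by (simp add: sum.remove)
    have key: "(\<Sum>i\<in>I'. c i * u' i j) = (\<Sum>i\<in>I. c i * u i j) - (c i0 + (\<Sum>i\<in>I'. c i * t i)) * u i0 j"
      for c j
      unfolding sumI u'_def by (simp add: algebra_simps sum_subtractf sum_distrib_right sum_distrib_left)
    have h: "card J < card I' \<or> (\<exists>c. (\<exists>i\<in>I'. c i \<noteq> 0) \<and> (\<forall>j\<in>J. (\<Sum>i\<in>I'. c i * u' i j) = 0))"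
      using insert.prems(3)
    proof
      assume "card (insert j0 J) < card I"
      then have "card J < card I'" using insert.hyps i0 insert.prems(1) by (simp add: I'_def)
      then show ?thesis by blast
    next
      assume "\<exists>c. (\<exists>i\<in>I. c i \<noteq> 0) \<and> (\<forall>j\<in>insert j0 J. (\<Sum>i\<in>I. c i * u i j) = 0)"
      then obtain c where c: "\<exists>i\<in>I. c i \<noteq> 0" "\<forall>j\<in>insert j0 J. (\<Sum>i\<in>I. c i * u i j) = 0"
        by blast
      have "(\<Sum>i\<in>I'. c i * u' i j0) = 0" by (simp add: u'0)
      then have "(c i0 + (\<Sum>i\<in>I'. c i * t i)) * u i0 j0 = 0" using key[of c j0] c(2) by simp
      then have s0: "c i0 + (\<Sum>i\<in>I'. c i * t i) = 0" using i0 by simp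
      have "\<forall>j\<in>J. (\<Sum>i\<in>I'. c i * u' i j) = 0" using key c(2) s0 by simp
      moreover have "\<exists>i\<in>I'. c i \<noteq> 0"
      proof (rule ccontr)
        assume "\<not> (\<exists>i\<in>I'. c i \<noteq> 0)"
        then have "\<forall>i\<in>I'. c i = 0" by blast
        then have "c i0 = 0" using s0 by simp
        then show False using c(1) \<open>\<forall>i\<in>I'. c i = 0\<close> by (auto simp: I'_def)
      qed
      ultimately show ?thesis by blast
    qed
    obtain c where c: "\<forall>i\<in>I'. c i \<in> K" "\<exists>i\<in>I'. c i \<noteq> 0" "\<forall>j\<in>J. (\<Sum>i\<in>I'. c i * u' i j) = 0"
      using insert.IH[OF finI' _ h] u'K by blast
    define c' where "c' = c(i0 := - (\<Sum>i\<in>I'. c i * t i))"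
    have c'I': "(\<Sum>i\<in>I'. c' i * f i) = (\<Sum>i\<in>I'. c i * f i)" for f
      by (intro sum.cong) (auto simp: c'_def I'_def)
    have "(\<Sum>i\<in>I'. c i * t i) \<in> K"
      using c(1) tK subfield_simps(4)[OF K] by (intro subfield_sum[OF K]) (auto simp: I'_def)
    then have "\<forall>i\<in>I. c' i \<in> K"
      using c(1) subfield_simps(5)[OF K] by (auto simp: c'_def I'_def)
    moreover have "\<exists>i\<in>I. c' i \<noteq> 0" using c(2) by (auto simp: c'_def I'_def)
    moreover have "\<forall>j\<in>insert j0 J. (\<Sum>i\<in>I. c' i * u i j) = 0"
    proof
      fix j assume j: "j \<in> insert j0 J"
      have "(\<Sum>i\<in>I'. c i * u' i j) = (\<Sum>i\<in>I. c' i * u i j) - (c' i0 + (\<Sum>i\<in>I'. c' i * t i)) * u i0 j"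
        using key[of c' j] c'I' by simp
      also have "c' i0 + (\<Sum>i\<in>I'. c' i * t i) = 0" using c'I' by (simp add: c'_def)
      finally have "(\<Sum>i\<in>I. c' i * u i j) = (\<Sum>i\<in>I'. c i * u' i j)" by simp
      also have "\<dots> = 0" using j c(3) u'0 by auto
      finally show "(\<Sum>i\<in>I. c' i * u i j) = 0" .
    qed
    ultimately show ?thesis by blast
  qed
qed

lemma rsf_dvd:
  fixes P G :: "'a::alg_closed_field poly"
  assumes "rsquarefree P" "\<And>x. poly P x = 0 \<Longrightarrow> poly G x = 0"
  shows "P dvd G"
  using assms
proof (induction "degree P" arbitrary: P G rule: less_induct)
  case less
  have P0: "P \<noteq> 0" using less.prems(1) by (simp add: rsquarefree_def)
  show ?case
  proof (cases "degree P = 0")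
    case True
    then obtain c where "P = [:c:]" by (metis degree_eq_zeroE)
    then have "is_unit P" using P0 by (simp add: is_unit_const_poly_iff dvd_field_iff)
    then show ?thesis by (rule unit_imp_dvd)
  next
    case False
    then obtain x where x: "poly P x = 0" using alg_closed_imp_poly_has_root by blast
    then obtain P1 where P1: "P = [:-x, 1:] * P1" using poly_eq_0_iff_dvd by (metis dvdE)
    have "poly G x = 0" using less.prems(2) x by blast
    then obtain G1 where G1: "G = [:-x, 1:] * G1" using poly_eq_0_iff_dvd by (metis dvdE)
    have P10: "P1 \<noteq> 0" using P0 P1 by auto
    have degP1: "degree P1 < degree P" using P10 unfolding P1 by (subst degree_mult_eq) auto
    have ordP: "order x P = 1"
      using less.prems(1) x P0 unfolding rsquarefree_def by (metis order_root)
    have "order x P = order x [:-x, 1:] + order x P1" using P1 P0 order_mult by metis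
    then have "order x P1 = 0" using ordP by (simp add: order_power_n_n[of x 1, simplified])
    then have P1x: "poly P1 x \<noteq> 0" using P10 by (simp add: order_root)
    have "rsquarefree P1"
      unfolding rsquarefree_def
    proof (intro conjI allI P10)
      fix a
      have "P1 dvd P" using P1 by (metis dvd_triv_right)
      then have "order a P1 \<le> order a P" using P0 by (intro dvd_imp_order_le)
      then show "order a P1 = 0 \<or> order a P1 = 1"
        using less.prems(1) unfolding rsquarefree_def by (metis le_SucE le_zero_eq One_nat_def)
    qed
    moreover have "poly G1 y = 0" if "poly P1 y = 0" for y
    proof -
      have "y \<noteq> x" using P1x that by auto
      moreover have "poly G y = 0" using less.prems(2) that P1 by simp
      ultimately show ?thesis using G1 by simp
    qed
    ultimately have "P1 dvd G1" using less.hyps degP1 by blast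
    then have "[:-x, 1:] * P1 dvd [:-x, 1:] * G1" by (rule mult_dvd_mono[OF dvd_refl])
    then show ?thesis using P1 G1 by metis
  qed
qed

context
  fixes p :: nat
  assumes pr: "prime p" and ch: "CHAR('e::field) = p"
begin

lemma frob_add: "((x::'e) + y) ^ (p ^ i) = x ^ (p ^ i) + y ^ (p ^ i)"
  using freshmans_dream'[of "p ^ i" i x y] pr ch by simp

lemma ppoly_add:
  fixes Q :: "'e poly"
  assumes "\<And>k. coeff Q k \<noteq> 0 \<Longrightarrow> \<exists>i. k = p ^ i"
  shows "poly Q (x + y) = poly Q x + poly Q y"
proof -
  have "coeff Q k * (x + y) ^ k = coeff Q k * x ^ k + coeff Q k * y ^ k" for k
  proof (cases "coeff Q k = 0")
    case False
    then obtain i where "k = p ^ i" using assms by blast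
    then show ?thesis using frob_add by (simp add: algebra_simps)
  qed simp
  then show ?thesis unfolding poly_altdef by (simp add: sum.distrib)
qed

lemma ppoly_zero:
  fixes Q :: "'e poly"
  assumes "\<And>k. coeff Q k \<noteq> 0 \<Longrightarrow> \<exists>i. k = p ^ i"
  shows "poly Q 0 = 0"
proof -
  have "coeff Q 0 = 0"
  proof (rule ccontr)
    assume "coeff Q 0 \<noteq> 0"
    then obtain i where "0 = p ^ i" using assms by blast
    then show False using pr by (metis power_not_zero not_prime_0)
  qed
  then show ?thesis by (simp add: poly_0_coeff_0)
qed

end

definition aprod :: "'a::comm_semiring_1 list \<Rightarrow> nat multiset \<Rightarrow> 'a" where
  "aprod ws m = prod_mset (image_mset (\<lambda>j. ws ! j) m)"

definition natcomb :: "'a::comm_semiring_1 list \<Rightarrow> nat multiset set \<Rightarrow> 'a set" where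
  "natcomb ws M = {x. \<exists>b. x = (\<Sum>m\<in>M. of_nat (b m) * aprod ws m)}"

lemma sym_monomials_finite: "finite (sym_monomials k r)"
proof -
  have "sym_monomials k r = multisets_of_size {..<k} r"
    by (auto simp: sym_monomials_def multisets_of_size_def)
  then show ?thesis by auto
qed

lemma sym_monomials_mono: "k \<le> n \<Longrightarrow> sym_monomials k r \<subseteq> sym_monomials n r"
  by (auto simp: sym_monomials_def)

lemma natcomb_add: "x \<in> natcomb ws M \<Longrightarrow> y \<in> natcomb ws M \<Longrightarrow> x + y \<in> natcomb ws M"
proof -
  assume "x \<in> natcomb ws M" "y \<in> natcomb ws M"
  then obtain b b' where "x = (\<Sum>m\<in>M. of_nat (b m) * aprod ws m)" "y = (\<Sum>m\<in>M. of_nat (b' m) * aprod ws m)"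
    unfolding natcomb_def by blast
  then have "x + y = (\<Sum>m\<in>M. of_nat (b m + b' m) * aprod ws m)"
    by (simp add: sum.distrib algebra_simps)
  then show ?thesis unfolding natcomb_def by (intro CollectI exI[of _ "\<lambda>m. b m + b' m"])
qed

lemma natcomb_zero: "0 \<in> natcomb ws M"
  unfolding natcomb_def by (rule CollectI, rule exI[of _ "\<lambda>_. 0"]) simp

lemma natcomb_sum: "(\<And>i. i \<in> A \<Longrightarrow> f i \<in> natcomb ws M) \<Longrightarrow> sum f A \<in> natcomb ws M"
  by (induction A rule: infinite_finite_induct) (auto simp: natcomb_zero natcomb_add)

lemma natcomb_gen:
  assumes "finite M" "m0 \<in> M"
  shows "of_nat c * aprod ws m0 \<in> natcomb ws M"
proof -
  have "(\<Sum>m\<in>M. of_nat (if m = m0 then c else 0) * aprod ws m) = of_nat c * aprod ws m0"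
  proof -
    have "(\<Sum>m\<in>M. of_nat (if m = m0 then c else 0) * aprod ws m) = (\<Sum>m\<in>M. if m = m0 then of_nat c * aprod ws m else 0)"
      by (intro sum.cong) auto
    also have "\<dots> = of_nat c * aprod ws m0" using assms by (simp add: sum.delta)
    finally show ?thesis .
  qed
  then show ?thesis unfolding natcomb_def by (intro CollectI exI[of _ "\<lambda>m. if m = m0 then c else 0"]) simp
qed

lemma pow_natcomb:
  fixes ws :: "'a::field list"
  assumes "v \<in> spanset p ws"
  shows "v ^ r \<in> natcomb ws (sym_monomials (length ws) r)"
proof (induction r)
  case 0
  have "{#} \<in> sym_monomials (length ws) 0" by (simp add: sym_monomials_def)
  from natcomb_gen[OF sym_monomials_finite this, of 1 ws] show ?case
    by (simp add: aprod_def)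
next
  case (Suc r)
  obtain a where a: "v = (\<Sum>j<length ws. of_nat (a j) * ws ! j)"
    using assms by (rule spansetE) blast
  obtain b where b: "v ^ r = (\<Sum>m\<in>sym_monomials (length ws) r. of_nat (b m) * aprod ws m)"
    using Suc.IH unfolding natcomb_def by blast
  have "v ^ Suc r = v * v ^ r" by simp
  also have "\<dots> = (\<Sum>j<length ws. of_nat (a j) * ws ! j) * (\<Sum>m\<in>sym_monomials (length ws) r. of_nat (b m) * aprod ws m)"
    using a b by simp
  also have "\<dots> = (\<Sum>j<length ws. \<Sum>m\<in>sym_monomials (length ws) r.
      (of_nat (a j) * ws ! j) * (of_nat (b m) * aprod ws m))"
    by (rule sum_product)
  also have "\<dots> \<in> natcomb ws (sym_monomials (length ws) (Suc r))"
  proof (intro natcomb_sum)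
    fix j m assume j: "j \<in> {..<length ws}" and m: "m \<in> sym_monomials (length ws) r"
    have mem: "add_mset j m \<in> sym_monomials (length ws) (Suc r)"
      using j m by (auto simp: sym_monomials_def)
    have eq: "(of_nat (a j) * ws ! j) * (of_nat (b m) * aprod ws m) = of_nat (a j * b m) * aprod ws (add_mset j m)"
      by (simp add: aprod_def algebra_simps)
    show "(of_nat (a j) * ws ! j) * (of_nat (b m) * aprod ws m) \<in> natcomb ws (sym_monomials (length ws) (Suc r))"
      unfolding eq by (rule natcomb_gen[OF sym_monomials_finite mem])
  qed
  finally show ?case .
qed

lemma additive_natcomb:
  fixes q :: "'a::comm_ring_1 \<Rightarrow> 'a"
  assumes add: "\<And>x y. q (x + y) = q x + q y"
    and gen: "\<And>m. m \<in> M \<Longrightarrow> q (aprod ws m) = 0"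
    and w: "w \<in> natcomb ws M"
  shows "q w = 0"
proof -
  have q0: "q 0 = 0" using add[of 0 0] by simp
  have qs: "q (of_nat c * x) = of_nat c * q x" for c x
    by (induction c) (auto simp: q0 add algebra_simps)
  have qsum: "q (sum f A) = (\<Sum>i\<in>A. q (f i))" for f :: "nat multiset \<Rightarrow> 'a" and A
    by (induction A rule: infinite_finite_induct) (auto simp: q0 add)
  obtain b where b: "w = (\<Sum>m\<in>M. of_nat (b m) * aprod ws m)" using w unfolding natcomb_def by blast
  show ?thesis unfolding b qsum qs using gen by simp
qed

lemma P_rsquarefree:
  fixes P L :: "'a::alg_closed_field poly"
  assumes L: "rsquarefree L" and r: "r > 0"
    and LP: "L = [:0, 1:] * pcompose P (monom 1 r)"
  shows "rsquarefree P"
proof -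
  have L0: "L \<noteq> 0" using L by (simp add: rsquarefree_def)
  have P0: "P \<noteq> 0" using L0 LP by auto
  have "order a P \<le> 1" for a
  proof (rule ccontr)
    assume "\<not> order a P \<le> 1"
    then have "[:-a, 1:] ^ 2 dvd P" using order_divides[of a 2 P] by simp
    then obtain R where R: "P = [:-a, 1:] * [:-a, 1:] * R" by (auto simp: power2_eq_square elim!: dvdE)
    obtain v where v: "v ^ r = a" using r nth_root_exists by blast
    have "poly (pcompose [:-a, 1:] (monom 1 r)) v = 0" using v by (simp add: poly_pcompose poly_monom)
    then have d: "[:-v, 1:] dvd pcompose [:-a, 1:] (monom 1 r)" using poly_eq_0_iff_dvd by blast
    have "pcompose P (monom 1 r) = pcompose [:-a, 1:] (monom 1 r) * pcompose [:-a, 1:] (monom 1 r) * pcompose R (monom 1 r)"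
      by (simp only: R pcompose_mult)
    then have "[:-v, 1:] * [:-v, 1:] dvd pcompose P (monom 1 r)"
      using d by (metis dvd_mult2 mult_dvd_mono)
    then have "[:-v, 1:] ^ 2 dvd L" unfolding LP power2_eq_square by (rule dvd_mult)
    then have "2 \<le> order v L" using order_divides[of v 2 L] L0 by simp
    then show False using L unfolding rsquarefree_def by (metis One_nat_def Suc_1 not_less_eq_eq order.refl zero_le)
  qed
  then show ?thesis unfolding rsquarefree_def using P0 by (metis le_SucE le_zero_eq One_nat_def)
qed

definition Qpol :: "nat \<Rightarrow> nat \<Rightarrow> (nat \<Rightarrow> 'a::comm_ring_1) \<Rightarrow> 'a poly" where
  "Qpol p N d = (\<Sum>i\<le>N. smult (d i) (monom 1 (p ^ i)))"

lemma Qpol_coeff: "coeff (Qpol p N d) j = (\<Sum>i\<le>N. d i * (if p ^ i = j then 1 else 0))"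
  unfolding Qpol_def by (simp add: coeff_sum)

lemma Qpol_poly: "poly (Qpol p N d) x = (\<Sum>i\<le>N. d i * x ^ (p ^ i))"
  unfolding Qpol_def by (simp add: poly_sum poly_monom)

lemma Qpol_coeff_pow:
  assumes "p > 1" "i \<le> N"
  shows "coeff (Qpol p N d) (p ^ i) = d i"
proof -
  have "coeff (Qpol p N d) (p ^ i) = (\<Sum>i'\<le>N. if i' = i then d i' else 0)"
    unfolding Qpol_coeff using assms(1) by (intro sum.cong) auto
  also have "\<dots> = d i" using assms(2) by (simp add: sum.delta)
  finally show ?thesis .
qed

lemma Qpol_coeff_nz:
  assumes "coeff (Qpol p N d) j \<noteq> 0"
  shows "\<exists>i\<le>N. j = p ^ i \<and> d i \<noteq> 0"
proof (rule ccontr)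
  assume "\<not> ?thesis"
  then have "\<forall>i\<le>N. d i * (if p ^ i = j then 1 else 0) = 0" by auto
  then have "coeff (Qpol p N d) j = 0" unfolding Qpol_coeff by (intro sum.neutral) auto
  then show False using assms by simp
qed

lemma Qpol_degree:
  assumes "p > 1"
  shows "degree (Qpol p N d) \<le> p ^ N"
proof (rule degree_le, intro allI impI)
  fix j assume j: "p ^ N < j"
  show "coeff (Qpol p N d) j = 0"
  proof (rule ccontr)
    assume "coeff (Qpol p N d) j \<noteq> 0"
    then obtain i where "i \<le> N" "j = p ^ i" using Qpol_coeff_nz by blast
    then have "j \<le> p ^ N" using assms by (simp add: power_increasing)
    then show False using j by simp
  qed
qed

lemma Qpol_over:
  assumes "is_subfield K" "\<And>i. i \<le> N \<Longrightarrow> d i \<in> K"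
  shows "poly_over K (Qpol p N d)"
  unfolding poly_over_def Qpol_coeff
  by (intro allI subfield_sum[OF assms(1)]) (use assms subfield_simps[OF assms(1)] in auto)

lemma Qpol_linearized:
  assumes "p > 1" "\<exists>i\<le>N. d i \<noteq> 0"
  shows "p_linearized p (Qpol p N d)"
proof -
  define S where "S = {i. i \<le> N \<and> d i \<noteq> 0}"
  have finS: "finite S" "S \<noteq> {}" using assms(2) by (auto simp: S_def)
  define imax where "imax = Max S"
  have imaxS: "imax \<in> S" using finS by (simp add: imax_def)
  have "p_poly p imax (Qpol p N d)"
    unfolding p_poly_def
  proof (intro conjI allI impI)
    show "coeff (Qpol p N d) (p ^ imax) \<noteq> 0"
      using imaxS Qpol_coeff_pow[OF assms(1), of imax N d] by (auto simp: S_def)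
  next
    fix k assume "coeff (Qpol p N d) k \<noteq> 0"
    then obtain i where i: "i \<le> N" "k = p ^ i" "d i \<noteq> 0" using Qpol_coeff_nz by blast
    then have "i \<le> imax" using finS by (auto simp: imax_def S_def)
    then show "\<exists>i\<le>imax. k = p ^ i" using i by blast
  qed
  then show ?thesis unfolding p_linearized_def by blast
qed

definition Apol :: "nat \<Rightarrow> (nat \<Rightarrow> 'a::comm_ring_1) \<Rightarrow> 'a poly" where
  "Apol T d = (\<Sum>t\<le>T. monom (d t) t)"

lemma Apol_coeff: "coeff (Apol T d) s = (if s \<le> T then d s else 0)"
  unfolding Apol_def by (simp add: coeff_sum sum.delta' cong: if_cong)

lemma Apol_degree: "degree (Apol T d) \<le> T"
  by (rule degree_le) (simp add: Apol_coeff)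

lemma descent:
  fixes K :: "'e::field set" and P :: "'e poly" and c :: "nat \<Rightarrow> 'e"
  assumes K: "is_subfield K" and p1: "p > 1" and PK: "poly_over K P" and P0: "P \<noteq> 0"
    and cnz: "\<exists>i\<le>N. c i \<noteq> 0" and dv: "P dvd Qpol p N c"
  shows "\<exists>Q. poly_over K Q \<and> p_linearized p Q \<and> P dvd Q \<and> degree Q \<le> p ^ N"
proof -
  define T where "T = p ^ N"
  obtain A where A: "Qpol p N c = P * A" using dv by (elim dvdE)
  have degA: "degree A \<le> T"
  proof (cases "A = 0")
    case False
    then have "degree (P * A) = degree P + degree A" using P0 by (simp add: degree_mult_eq)
    then show ?thesis using Qpol_degree[OF p1, of N c] A by (simp add: T_def)
  qed simp
  define I where "I = Inl ` {..N} \<union> Inr ` {..T}"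
  define J where "J = {..T + degree P}"
  define u where "u x j = (case x of Inl i \<Rightarrow> coeff (monom (1::'e) (p ^ i)) j
                         | Inr t \<Rightarrow> - coeff (monom 1 t * P) j)" for x j
  have finI: "finite I" by (simp add: I_def)
  have finJ: "finite J" by (simp add: J_def)
  have iden: "(\<Sum>x\<in>I. d x * u x j) = coeff (Qpol p N (d \<circ> Inl) - Apol T (d \<circ> Inr) * P) j"
    for d :: "nat + nat \<Rightarrow> 'e" and j
  proof -
    have "(\<Sum>x\<in>I. d x * u x j) = (\<Sum>x\<in>Inl ` {..N}. d x * u x j) + (\<Sum>x\<in>Inr ` {..T}. d x * u x j)"
      unfolding I_def by (rule sum.union_disjoint) auto
    also have "(\<Sum>x\<in>Inl ` {..N}. d x * u x j) = (\<Sum>i\<le>N. d (Inl i) * coeff (monom 1 (p ^ i)) j)"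
      by (subst sum.reindex) (auto simp: u_def inj_on_def)
    also have "(\<Sum>x\<in>Inr ` {..T}. d x * u x j) = - (\<Sum>t\<le>T. d (Inr t) * coeff (monom 1 t * P) j)"
      by (subst sum.reindex) (auto simp: u_def inj_on_def sum_negf)
    also have "(\<Sum>i\<le>N. d (Inl i) * coeff (monom 1 (p ^ i)) j) = coeff (Qpol p N (d \<circ> Inl)) j"
      unfolding Qpol_coeff by (intro sum.cong) auto
    also have "(\<Sum>t\<le>T. d (Inr t) * coeff (monom 1 t * P) j) = coeff (Apol T (d \<circ> Inr) * P) j"
      unfolding Apol_def sum_distrib_right coeff_sum by (intro sum.cong) (auto simp: coeff_monom_mult)
    finally show ?thesis by (simp add: comp_def)
  qed
  have vanish: "coeff (Qpol p N (d \<circ> Inl) - Apol T (d \<circ> Inr) * P) j = 0" if "j \<notin> J"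
    for d :: "nat + nat \<Rightarrow> 'e" and j
  proof -
    have "degree (Apol T (d \<circ> Inr) * P) \<le> T + degree P"
      using degree_mult_le[of "Apol T (d \<circ> Inr)" P] Apol_degree[of T "d \<circ> Inr"] by simp
    moreover have "degree (Qpol p N (d \<circ> Inl)) \<le> T + degree P"
      using Qpol_degree[OF p1, of N "d \<circ> Inl"] by (simp add: T_def)
    ultimately have "degree (Qpol p N (d \<circ> Inl) - Apol T (d \<circ> Inr) * P) \<le> T + degree P"
      using degree_diff_le_max[of "Qpol p N (d \<circ> Inl)" "Apol T (d \<circ> Inr) * P"] by simp
    then show ?thesis using that by (intro coeff_eq_0) (auto simp: J_def)
  qed
  have rel_iff: "(\<forall>j\<in>J. (\<Sum>x\<in>I. d x * u x j) = 0) \<longleftrightarrow> Qpol p N (d \<circ> Inl) = Apol T (d \<circ> Inr) * P"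
    for d :: "nat + nat \<Rightarrow> 'e"
  proof
    assume h: "\<forall>j\<in>J. (\<Sum>x\<in>I. d x * u x j) = 0"
    have "Qpol p N (d \<circ> Inl) - Apol T (d \<circ> Inr) * P = 0"
    proof (rule poly_eqI)
      fix j show "coeff (Qpol p N (d \<circ> Inl) - Apol T (d \<circ> Inr) * P) j = coeff 0 j"
        using h iden vanish by (cases "j \<in> J") auto
    qed
    then show "Qpol p N (d \<circ> Inl) = Apol T (d \<circ> Inr) * P" by simp
  next
    assume "Qpol p N (d \<circ> Inl) = Apol T (d \<circ> Inr) * P"
    then show "\<forall>j\<in>J. (\<Sum>x\<in>I. d x * u x j) = 0" using iden by simp
  qed
  have uK: "u x j \<in> K" if "x \<in> I" "j \<in> J" for x j
    using subfield_simps[OF K] PK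
    by (cases x) (auto simp: u_def coeff_monom_mult poly_over_def)
  define d0 where "d0 = case_sum c (coeff A)"
  have "Apol T (d0 \<circ> Inr) = A"
    unfolding Apol_def d0_def using degA by (simp add: poly_as_sum_of_monoms' comp_def)
  then have "Qpol p N (d0 \<circ> Inl) = Apol T (d0 \<circ> Inr) * P"
    using A by (simp add: d0_def comp_def mult.commute)
  then have rel0: "\<forall>j\<in>J. (\<Sum>x\<in>I. d0 x * u x j) = 0" using rel_iff by blast
  have nz0: "\<exists>x\<in>I. d0 x \<noteq> 0"
  proof -
    obtain i where "i \<le> N" "c i \<noteq> 0" using cnz by blast
    then have "Inl i \<in> I" "d0 (Inl i) \<noteq> 0" by (auto simp: I_def d0_def)
    then show ?thesis by blast
  qed
  obtain d where dK: "\<forall>x\<in>I. d x \<in> K" and dnz: "\<exists>x\<in>I. d x \<noteq> 0"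
    and drel: "\<forall>j\<in>J. (\<Sum>x\<in>I. d x * u x j) = 0"
  proof -
    have "\<exists>d. (\<forall>x\<in>I. d x \<in> K) \<and> (\<exists>x\<in>I. d x \<noteq> 0) \<and> (\<forall>j\<in>J. (\<Sum>x\<in>I. d x * u x j) = 0)"
    proof (rule GE[OF K finI finJ])
      show "\<And>i j. i \<in> I \<Longrightarrow> j \<in> J \<Longrightarrow> u i j \<in> K" by (rule uK)
      show "card J < card I \<or> (\<exists>c. (\<exists>i\<in>I. c i \<noteq> 0) \<and> (\<forall>j\<in>J. (\<Sum>i\<in>I. c i * u i j) = 0))"
        using rel0 nz0 by blast
    qed
    then show ?thesis using that by blast
  qed
  have Qd: "Qpol p N (d \<circ> Inl) = Apol T (d \<circ> Inr) * P" using drel rel_iff by blast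
  have lnz: "\<exists>i\<le>N. (d \<circ> Inl) i \<noteq> 0"
  proof (rule ccontr)
    assume "\<not> ?thesis"
    then have z: "\<forall>i\<le>N. d (Inl i) = 0" by auto
    have "Qpol p N (d \<circ> Inl) = 0"
      by (rule poly_eqI) (simp add: Qpol_coeff z)
    then have "Apol T (d \<circ> Inr) = 0" using Qd P0 by simp
    then have "\<forall>t\<le>T. d (Inr t) = 0" using Apol_coeff[of T "d \<circ> Inr"] by (metis comp_apply coeff_0)
    then show False using dnz z by (auto simp: I_def)
  qed
  show ?thesis
  proof (intro exI conjI)
    show "poly_over K (Qpol p N (d \<circ> Inl))" using dK by (intro Qpol_over[OF K]) (auto simp: I_def)
    show "p_linearized p (Qpol p N (d \<circ> Inl))" using lnz by (rule Qpol_linearized[OF p1])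
    show "P dvd Qpol p N (d \<circ> Inl)" unfolding Qd by simp
    show "degree (Qpol p N (d \<circ> Inl)) \<le> p ^ N" by (rule Qpol_degree[OF p1])
  qed
qed

lemma hom_from_span:
  fixes zs :: "'e::field list"
  assumes pr: "prime p" and ch: "CHAR('e) = p"
    and len: "length zs \<le> card (sym_monomials n r)"
  shows "sym_power_hom_image p n r (spanset p zs)"
proof -
  define SM where "SM = sym_monomials n r"
  define N where "N = card SM"
  have p1: "p > 1" using pr prime_gt_1_nat by blast
  have ofmod: "of_nat (k mod p) = (of_nat k :: 'e)" for k
    using of_nat_mod_CHAR[where 'a='e] ch by simp
  obtain e where e: "bij_betw e {0..<N} SM"
    using ex_bij_betw_nat_finite[OF sym_monomials_finite[of n r]] unfolding N_def SM_def by blast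
  define f where "f c = (\<Sum>j<length zs. of_nat (c (e j)) * zs ! j)" for c :: "nat multiset \<Rightarrow> nat"
  have "\<forall>c\<in>sym_power p n r. \<forall>d\<in>sym_power p n r. f (sym_add p c d) = f c + f d"
    by (simp add: f_def sym_add_def ofmod sum.distrib algebra_simps)
  moreover have "\<forall>a<p. \<forall>c\<in>sym_power p n r. f (sym_smul p a c) = of_nat a * f c"
    by (simp add: f_def sym_smul_def ofmod sum_distrib_left algebra_simps)
  moreover have "f ` sym_power p n r = spanset p zs"
  proof
    show "f ` sym_power p n r \<subseteq> spanset p zs"
    proof
      fix x assume "x \<in> f ` sym_power p n r"
      then obtain c where c: "c \<in> sym_power p n r" "x = f c" by blast
      have "(\<Sum>j<length zs. of_nat ((c \<circ> e) j) * zs ! j) \<in> spanset p zs"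
        by (rule spansetI) (use c(1) in \<open>auto simp: sym_power_def\<close>)
      then show "x \<in> spanset p zs" using c(2) by (simp add: f_def)
    qed
  next
    show "spanset p zs \<subseteq> f ` sym_power p n r"
    proof
      fix z assume "z \<in> spanset p zs"
      then obtain a where a: "z = (\<Sum>j<length zs. of_nat (a j) * zs ! j)" "\<And>j. a j < p"
        by (rule spansetE) blast
      define c where "c m = (if m \<in> SM \<and> inv_into {0..<N} e m < length zs
          then a (inv_into {0..<N} e m) else 0)" for m
      have "c \<in> sym_power p n r"
        unfolding sym_power_def using a(2) p1 by (auto simp: c_def SM_def)
      moreover have "f c = z"
        unfolding f_def a(1)
      proof (intro sum.cong refl)
        fix j assume j: "j \<in> {..<length zs}"
        then have jN: "j \<in> {0..<N}" using len by (auto simp: N_def SM_def)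
        then have "e j \<in> SM" using e by (auto simp: bij_betw_def)
        moreover have "inv_into {0..<N} e (e j) = j"
          using e jN by (auto simp: bij_betw_def inv_into_f_f)
        ultimately show "of_nat (c (e j)) * zs ! j = of_nat (a j) * zs ! j"
          using j by (simp add: c_def)
      qed
      ultimately show "z \<in> f ` sym_power p n r" by blast
    qed
  qed
  ultimately show ?thesis unfolding sym_power_hom_image_def by blast
qed

theorem corollary5p2:
  fixes p n r :: nat
    and K E :: "'e::alg_closed_field set"
    and L P LP :: "'e poly"
  assumes "prime p"
    and "CHAR('e) = p"
    and "is_subfield K"
    and "poly_over K L" and "p_poly p n L" and "rsquarefree L"
    and "is_splitting_field K L E"
    and "r > 0" and "r dvd p - 1"
    and "poly_over K P" and "L = [:0, 1:] * pcompose P (monom 1 r)"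
    and "poly_over K LP" and "p_linearized p LP" and "P dvd LP"
    and "\<And>Q. poly_over K Q \<Longrightarrow> p_linearized p Q \<Longrightarrow> P dvd Q \<Longrightarrow> degree LP \<le> degree Q"
  shows "sym_power_hom_image p n r (root_space UNIV LP)"
proof -
  note pr = assms(1) and ch = assms(2) and K = assms(3) and pL = assms(5) and rsf = assms(6)
    and r0 = assms(8) and PK = assms(10) and LPeq = assms(11) and LPlin = assms(13)
    and PLP = assms(14) and minim = assms(15)
  have p1: "p > 1" using pr prime_gt_1_nat by blast
  have L0: "L \<noteq> 0" using rsf by (simp add: rsquarefree_def)
  have Lcoef: "\<And>k. coeff L k \<noteq> 0 \<Longrightarrow> \<exists>i. k = p ^ i" using pL unfolding p_poly_def by blast
  have degL: "degree L \<le> p ^ n"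
  proof (rule degree_le, intro allI impI)
    fix k assume k: "p ^ n < k"
    show "coeff L k = 0"
    proof (rule ccontr)
      assume "coeff L k \<noteq> 0"
      then obtain i where "i \<le> n" "k = p ^ i" using pL unfolding p_poly_def by blast
      then have "k \<le> p ^ n" using p1 by (simp add: power_increasing)
      then show False using k by simp
    qed
  qed
  define VL where "VL = {x. poly L x = 0}"
  have VLfin: "finite VL" unfolding VL_def using L0 by (rule poly_roots_finite)
  have VL0: "0 \<in> VL" unfolding VL_def using ppoly_zero[OF pr ch, of L] Lcoef by blast
  have VLadd: "\<forall>x\<in>VL. \<forall>y\<in>VL. x + y \<in> VL"
    unfolding VL_def using ppoly_add[OF pr ch, of L] Lcoef by auto
  have cardVL: "card VL \<le> p ^ n"
    using card_poly_roots_bound[OF L0] degL unfolding VL_def by linarith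
  obtain ws where ws: "set ws \<subseteq> VL" "spanset p ws = VL" "p ^ length ws \<le> card VL"
    using span_exists[OF pr ch VLfin VL0 VLadd] by blast
  define k where "k = length ws"
  have kn: "k \<le> n"
    using ws(3) cardVL p1 unfolding k_def by (meson order_trans power_le_imp_le_exp)
  define M where "M = sym_monomials k r"
  define N where "N = card (sym_monomials n r)"
  have Mfin: "finite M" unfolding M_def by (rule sym_monomials_finite)
  have cardM: "card M \<le> N"
    unfolding M_def N_def using sym_monomials_mono[OF kn] sym_monomials_finite by (rule card_mono[rotated])
  have "\<exists>c. (\<forall>i\<in>{..N}. c i \<in> (UNIV::'e set)) \<and> (\<exists>i\<in>{..N}. c i \<noteq> 0) \<and>
      (\<forall>m\<in>M. (\<Sum>i\<in>{..N}. c i * aprod ws m ^ (p ^ i)) = 0)"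
  proof (rule GE)
    show "is_subfield (UNIV :: 'e set)" by (simp add: is_subfield_def)
    show "card M < card {..N} \<or> (\<exists>c. (\<exists>i\<in>{..N}. c i \<noteq> 0) \<and> (\<forall>m\<in>M. (\<Sum>i\<in>{..N}. c i * aprod ws m ^ (p ^ i)) = 0))"
      using cardM by simp
  qed (auto simp: Mfin)
  then obtain c where cnz: "\<exists>i\<le>N. c i \<noteq> 0"
    and crel: "\<And>m. m \<in> M \<Longrightarrow> (\<Sum>i\<le>N. c i * aprod ws m ^ (p ^ i)) = 0"
    by auto
  define qc where "qc x = (\<Sum>i\<le>N. c i * x ^ (p ^ i))" for x :: 'e
  have qc_add: "qc (x + y) = qc x + qc y" for x y
    unfolding qc_def by (simp add: frob_add[OF pr ch] sum.distrib algebra_simps)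
  have qc_VL: "qc (v ^ r) = 0" if "v \<in> VL" for v
  proof -
    have "v ^ r \<in> natcomb ws M"
      unfolding M_def k_def by (rule pow_natcomb[where p=p]) (use that ws(2) in simp)
    then show ?thesis using additive_natcomb[of qc M ws] qc_add crel unfolding qc_def by blast
  qed
  have polyL: "poly L v = v * poly P (v ^ r)" for v
    unfolding LPeq by (simp add: poly_pcompose poly_monom)
  have P0: "P \<noteq> 0" using L0 LPeq by auto
  have Prsf: "rsquarefree P" using P_rsquarefree[OF rsf r0 LPeq] .
  have "P dvd Qpol p N c"
  proof (rule rsf_dvd[OF Prsf])
    fix b assume b: "poly P b = 0"
    obtain v where v: "v ^ r = b" using r0 nth_root_exists by blast
    have "v \<in> VL" unfolding VL_def using polyL[of v] v b by simp
    then have "qc b = 0" using qc_VL v by blast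
    then show "poly (Qpol p N c) b = 0" by (simp add: Qpol_poly qc_def)
  qed
  then obtain Q where Q: "poly_over K Q" "p_linearized p Q" "P dvd Q" "degree Q \<le> p ^ N"
    using descent[OF K p1 PK P0 cnz] by blast
  have degLP: "degree LP \<le> p ^ N" using minim[OF Q(1-3)] Q(4) by linarith
  obtain m where mLP: "p_poly p m LP" using LPlin unfolding p_linearized_def by blast
  have LP0: "LP \<noteq> 0" using mLP unfolding p_poly_def by auto
  have LPcoef: "\<And>k. coeff LP k \<noteq> 0 \<Longrightarrow> \<exists>i. k = p ^ i" using mLP unfolding p_poly_def by blast
  define Z where "Z = {x. poly LP x = 0}"
  have Zfin: "finite Z" unfolding Z_def using LP0 by (rule poly_roots_finite)
  have Z0: "0 \<in> Z" unfolding Z_def using ppoly_zero[OF pr ch, of LP] LPcoef by blast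
  have Zadd: "\<forall>x\<in>Z. \<forall>y\<in>Z. x + y \<in> Z"
    unfolding Z_def using ppoly_add[OF pr ch, of LP] LPcoef by auto
  have cardZ: "card Z \<le> p ^ N"
    using card_poly_roots_bound[OF LP0] degLP unfolding Z_def by linarith
  obtain zs where zs: "set zs \<subseteq> Z" "spanset p zs = Z" "p ^ length zs \<le> card Z"
    using span_exists[OF pr ch Zfin Z0 Zadd] by blast
  have "length zs \<le> N"
    using zs(3) cardZ p1 by (meson order_trans power_le_imp_le_exp)
  then have "sym_power_hom_image p n r (spanset p zs)"
    using hom_from_span[OF pr ch] unfolding N_def by blast
  moreover have "root_space UNIV LP = Z" unfolding root_space_def Z_def by simp
  ultimately show ?thesis using zs(2) by simp
qed

end
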